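(* In the quantum group $U_q(\mathfrak{sl}_n(\mathbb{C}))$ (with $q\in\mathbb{C}^\times$, $q\neq\pm1$), the elements $E_{i,j}$ defined below satisfy $E_{i,i+1}=e_i$ and $E_{i+1,i}=f_i$ for $i=1,\dots,n-1$, and $E_{i,j}=E_{i,k}E_{k,j}-qE_{k,j}E_{i,k}$ for $1\le i<k<j\le n$, and $E_{i,j}=E_{i,k}E_{k,j}-q^{-1}E_{k,j}E_{i,k}$ for $n\ge i>k>j\ge 1$.
   Context: $U_q(\mathfrak{sl}_n(\mathbb{C}))$ is the unital associative $\mathbb{C}$-algebra generated by $e_i,f_i,k_i,k_i^{-1}$ ($1\le i\le n-1$) with relations $k_ik_i^{-1}=k_i^{-1}k_i=1$, $k_ik_j=k_jk_i$, $k_ie_jk_i^{-1}=q^{a_{ij}}e_j$, $k_if_jk_i^{-1}=q^{-a_{ij}}f_j$, $e_if_j-f_je_i=\delta_{ij}\frac{k_i-k_i^{-1}}{q-q^{-1}}$, and $e_i^2e_j-(q+q^{-1})e_ie_je_i+e_je_i^2=0$, $f_i^2f_j-(q+q^{-1})f_if_jf_i+f_jf_i^2=0$ for $|i-j|=1$, $e_ie_j=e_je_i$, $f_if_j=f_jf_i$ for $|i-j|>1$; here $a_{ii}=2$, $a_{ij}=-1$ if $|i-j|=1$, $a_{ij}=0$ if $|i-j|>1$. There are algebra automorphisms $T_1,\dots,T_{n-1}$ of $U_q(\mathfrak{sl}_n(\mathbb{C}))$ (satisfying the braid relations) determined by $T_i(e_i)=-f_ik_i^{-1}$, $T_i(k_i)=k_i^{-1}$,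 $T_i(f_i)=-k_ie_i$; for $|i-j|=1$: $T_i(e_j)=e_ie_j-qe_je_i$, $T_i(k_j)=k_ik_j$, $T_i(f_j)=f_jf_i-q^{-1}f_if_j$; for $|i-j|>1$: $T_i(e_j)=e_j$, $T_i(k_j)=k_j$, $T_i(f_j)=f_j$. For $1\le i<j\le n$ let $T_{w_{i,j}}=(T_1T_2\cdots T_{n-1})(T_1\cdots T_{n-2})\cdots(T_1\cdots T_{n-i+1})(T_1\cdots T_{j-i-1})$ (there are $i-1$ blocks of the form $T_1\cdots T_{n-l}$, $l=1,\dots,i-1$, followed by $T_1\cdots T_{j-i-1}$, which is empty when $j=i+1$), and define $E_{i,j}=T_{w_{i,j}}(e_{j-i})$ and $E_{j,i}=T_{w_{i,j}}(f_{j-i})$. *)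

theory Defs
  imports Complex_Main
begin

text \<open>A complex algebra structure on a ring 'a is given by a central unital
ring homomorphism sigma from the complex numbers (scalar c acts as sigma c * _).\<close>
definition calg :: "(complex \<Rightarrow> 'a::ring_1) \<Rightarrow> bool" where
  "calg \<sigma> \<longleftrightarrow> (\<forall>a b. \<sigma> (a + b) = \<sigma> a + \<sigma> b) \<and> (\<forall>a b. \<sigma> (a * b) = \<sigma> a * \<sigma> b)
     \<and> \<sigma> 1 = 1 \<and> (\<forall>c x. \<sigma> c * x = x * \<sigma> c)"

definition calg_hom :: "(complex \<Rightarrow> 'a::ring_1) \<Rightarrow> ('a \<Rightarrow> 'a) \<Rightarrow> bool" where
  "calg_hom \<sigma> T \<longleftrightarrow> (\<forall>x y. T (x + y) = T x + T y) \<and> (\<forall>x y. T (x * y) = T x * T y)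
     \<and> T 1 = 1 \<and> (\<forall>c. T (\<sigma> c) = \<sigma> c)"

definition cartan :: "nat \<Rightarrow> nat \<Rightarrow> int" where
  "cartan i j = (if i = j then 2 else if i + 1 = j \<or> j + 1 = i then -1 else 0)"

definition adj :: "nat \<Rightarrow> nat \<Rightarrow> bool" where
  "adj i j \<longleftrightarrow> i + 1 = j \<or> j + 1 = i"

definition far :: "nat \<Rightarrow> nat \<Rightarrow> bool" where
  "far i j \<longleftrightarrow> i + 1 < j \<or> j + 1 < i"

definition Uq_rels ::
  "nat \<Rightarrow> complex \<Rightarrow> (complex \<Rightarrow> 'a::ring_1) \<Rightarrow> (nat \<Rightarrow> 'a) \<Rightarrow> (nat \<Rightarrow> 'a) \<Rightarrow> (nat \<Rightarrow> 'a) \<Rightarrow> (nat \<Rightarrow> 'a) \<Rightarrow> bool" where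
  "Uq_rels n q \<sigma> e f k kinv \<longleftrightarrow>
    (\<forall>i\<in>{1..<n}. k i * kinv i = 1 \<and> kinv i * k i = 1) \<and>
    (\<forall>i\<in>{1..<n}. \<forall>j\<in>{1..<n}. k i * k j = k j * k i) \<and>
    (\<forall>i\<in>{1..<n}. \<forall>j\<in>{1..<n}. k i * e j * kinv i = \<sigma> (q powi cartan i j) * e j) \<and>
    (\<forall>i\<in>{1..<n}. \<forall>j\<in>{1..<n}. k i * f j * kinv i = \<sigma> (q powi (- cartan i j)) * f j) \<and>
    (\<forall>i\<in>{1..<n}. \<forall>j\<in>{1..<n}. e i * f j - f j * e i =
        (if i = j then \<sigma> (inverse (q - inverse q)) * (k i - kinv i) else 0)) \<and>
    (\<forall>i\<in>{1..<n}. \<forall>j\<in>{1..<n}. adj i j \<longrightarrow>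
        e i * e i * e j - \<sigma> (q + inverse q) * (e i * e j * e i) + e j * e i * e i = 0 \<and>
        f i * f i * f j - \<sigma> (q + inverse q) * (f i * f j * f i) + f j * f i * f i = 0) \<and>
    (\<forall>i\<in>{1..<n}. \<forall>j\<in>{1..<n}. far i j \<longrightarrow> e i * e j = e j * e i \<and> f i * f j = f j * f i)"

definition lusztig_T ::
  "nat \<Rightarrow> complex \<Rightarrow> (complex \<Rightarrow> 'a::ring_1) \<Rightarrow> (nat \<Rightarrow> 'a) \<Rightarrow> (nat \<Rightarrow> 'a) \<Rightarrow> (nat \<Rightarrow> 'a) \<Rightarrow> (nat \<Rightarrow> 'a)
     \<Rightarrow> (nat \<Rightarrow> 'a \<Rightarrow> 'a) \<Rightarrow> bool" where
  "lusztig_T n q \<sigma> e f k kinv T \<longleftrightarrow>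
    (\<forall>i\<in>{1..<n}. calg_hom \<sigma> (T i) \<and> bij (T i)) \<and>
    (\<forall>i\<in>{1..<n}. T i (e i) = - (f i * kinv i) \<and> T i (k i) = kinv i \<and> T i (f i) = - (k i * e i)) \<and>
    (\<forall>i\<in>{1..<n}. \<forall>j\<in>{1..<n}. adj i j \<longrightarrow>
        T i (e j) = e i * e j - \<sigma> q * (e j * e i) \<and> T i (k j) = k i * k j \<and>
        T i (f j) = f j * f i - \<sigma> (inverse q) * (f i * f j)) \<and>
    (\<forall>i\<in>{1..<n}. \<forall>j\<in>{1..<n}. far i j \<longrightarrow>
        T i (e j) = e j \<and> T i (k j) = k j \<and> T i (f j) = f j) \<and>
    (\<forall>i\<in>{1..<n}. \<forall>j\<in>{1..<n}. adj i j \<longrightarrow> T i \<circ> T j \<circ> T i = T j \<circ> T i \<circ> T j) \<and>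
    (\<forall>i\<in>{1..<n}. \<forall>j\<in>{1..<n}. far i j \<longrightarrow> T i \<circ> T j = T j \<circ> T i)"

text \<open>T_1 T_2 ... T_m (composition; T_m is applied first).\<close>
definition Tchain :: "(nat \<Rightarrow> 'a \<Rightarrow> 'a) \<Rightarrow> nat \<Rightarrow> 'a \<Rightarrow> 'a" where
  "Tchain T m = foldr (\<circ>) (map T [1..<m+1]) id"

text \<open>T_{w_{i,j}} = (T_1..T_{n-1})(T_1..T_{n-2})...(T_1..T_{n-i+1})(T_1..T_{j-i-1}).\<close>
definition Tw :: "nat \<Rightarrow> (nat \<Rightarrow> 'a \<Rightarrow> 'a) \<Rightarrow> nat \<Rightarrow> nat \<Rightarrow> 'a \<Rightarrow> 'a" where
  "Tw n T i j = foldr (\<circ>) (map (\<lambda>l. Tchain T (n - l)) [1..<i]) id \<circ> Tchain T (j - i - 1)"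

definition Eij :: "nat \<Rightarrow> (nat \<Rightarrow> 'a \<Rightarrow> 'a) \<Rightarrow> (nat \<Rightarrow> 'a) \<Rightarrow> (nat \<Rightarrow> 'a) \<Rightarrow> nat \<Rightarrow> nat \<Rightarrow> 'a" where
  "Eij n T e f a b = (if a < b then Tw n T a b (e (b - a))
                      else if b < a then Tw n T b a (f (a - b)) else undefined)"

end

theory Submission imports Defs begin

locale uq =
  fixes n :: nat and q :: complex and \<sigma> :: "complex \<Rightarrow> 'a::ring_1"
    and e f k kinv :: "nat \<Rightarrow> 'a" and T :: "nat \<Rightarrow> 'a \<Rightarrow> 'a"
  assumes q0: "q \<noteq> 0" and q1: "q \<noteq> 1" and qm1: "q \<noteq> -1"
    and calg: "calg \<sigma>"
    and rels: "Uq_rels n q \<sigma> e f k kinv"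
    and LT: "lusztig_T n q \<sigma> e f k kinv T"
begin

lemma sadd: "\<sigma> (a + b) = \<sigma> a + \<sigma> b" using calg unfolding calg_def by blast
lemma smult: "\<sigma> (a * b) = \<sigma> a * \<sigma> b" using calg unfolding calg_def by blast
lemma sone: "\<sigma> 1 = 1" using calg unfolding calg_def by blast
lemma scomm: "\<sigma> c * x = x * \<sigma> c" using calg unfolding calg_def by blast
lemma szero: "\<sigma> 0 = 0" using sadd[of 0 0] by simp
lemma sminus: "\<sigma> (- a) = - \<sigma> a" using sadd[of a "-a"] by (simp add: szero add.inverse_unique)
lemma sdiff: "\<sigma> (a - b) = \<sigma> a - \<sigma> b" using sadd[of a "-b"] by (simp add: sminus)
lemma sassoc: "\<sigma> a * (\<sigma> b * x) = \<sigma> (a*b) * x" by (simp add: smult mult.assoc)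
lemma scomm2: "x * (\<sigma> c * y) = \<sigma> c * (x * y)"
  by (metis mult.assoc scomm)

lemma kinv_k: "i \<in> {1..<n} \<Longrightarrow> k i * kinv i = 1 \<and> kinv i * k i = 1"
  using rels unfolding Uq_rels_def by blast

lemma ke0: "i \<in> {1..<n} \<Longrightarrow> j \<in> {1..<n} \<Longrightarrow> k i * e j * kinv i = \<sigma> (q powi cartan i j) * e j"
  using rels unfolding Uq_rels_def by blast
lemma kf0: "i \<in> {1..<n} \<Longrightarrow> j \<in> {1..<n} \<Longrightarrow> k i * f j * kinv i = \<sigma> (q powi (- cartan i j)) * f j"
  using rels unfolding Uq_rels_def by blast

lemma conj_gen:
  assumes "K * Ki = 1" "Ki * K = 1" "K * x * Ki = \<sigma> c * x" "c \<noteq> 0"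
  shows "K * x = \<sigma> c * (x * K)" "Ki * x = \<sigma> (inverse c) * (x * Ki)"
proof -
  have "K * x = K * x * (Ki * K)" using assms by simp
  also have "\<dots> = (K * x * Ki) * K" by (simp add: mult.assoc)
  also have "\<dots> = \<sigma> c * x * K" using assms(3) by simp
  finally show "K * x = \<sigma> c * (x * K)" by (simp add: mult.assoc)
  have "x * Ki = (Ki * K) * x * Ki" using assms by simp
  also have "\<dots> = Ki * (K * x * Ki)" by (simp add: mult.assoc)
  also have "\<dots> = \<sigma> c * (Ki * x)" using assms by (simp add: scomm2)
  finally have "\<sigma> (inverse c) * (x * Ki) = \<sigma> (inverse c) * (\<sigma> c * (Ki * x))" by simp
  also have "\<dots> = Ki * x" using assms by (simp add: sassoc sone)
  finally show "Ki * x = \<sigma> (inverse c) * (x * Ki)" by simp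
qed

lemma ke: "i \<in> {1..<n} \<Longrightarrow> j \<in> {1..<n} \<Longrightarrow> k i * e j = \<sigma> (q powi cartan i j) * (e j * k i)"
  "i \<in> {1..<n} \<Longrightarrow> j \<in> {1..<n} \<Longrightarrow> kinv i * e j = \<sigma> (q powi (- cartan i j)) * (e j * kinv i)"
  using conj_gen[OF _ _ ke0] kinv_k q0 by (auto simp: power_int_minus)
lemma kf: "i \<in> {1..<n} \<Longrightarrow> j \<in> {1..<n} \<Longrightarrow> k i * f j = \<sigma> (q powi (- cartan i j)) * (f j * k i)"
  "i \<in> {1..<n} \<Longrightarrow> j \<in> {1..<n} \<Longrightarrow> kinv i * f j = \<sigma> (q powi (cartan i j)) * (f j * kinv i)"
  using conj_gen[OF _ _ kf0] kinv_k q0 by (auto simp: power_int_minus)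

lemma Thom: "i \<in> {1..<n} \<Longrightarrow> calg_hom \<sigma> (T i)" using LT unfolding lusztig_T_def by blast
lemma Tii: "i \<in> {1..<n} \<Longrightarrow> T i (e i) = - (f i * kinv i) \<and> T i (k i) = kinv i \<and> T i (f i) = - (k i * e i)"
  using LT unfolding lusztig_T_def by blast
lemma Tadj: "i \<in> {1..<n} \<Longrightarrow> j \<in> {1..<n} \<Longrightarrow> adj i j \<Longrightarrow>
        T i (e j) = e i * e j - \<sigma> q * (e j * e i) \<and> T i (f j) = f j * f i - \<sigma> (inverse q) * (f i * f j)"
  using LT unfolding lusztig_T_def by blast
lemma Tfar: "i \<in> {1..<n} \<Longrightarrow> j \<in> {1..<n} \<Longrightarrow> far i j \<Longrightarrow> T i (e j) = e j \<and> T i (f j) = f j"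
  using LT unfolding lusztig_T_def by blast
lemma ef: "i \<in> {1..<n} \<Longrightarrow> j \<in> {1..<n} \<Longrightarrow> e i * f j - f j * e i =
        (if i = j then \<sigma> (inverse (q - inverse q)) * (k i - kinv i) else 0)"
  using rels unfolding Uq_rels_def by blast
lemma efar: "i \<in> {1..<n} \<Longrightarrow> j \<in> {1..<n} \<Longrightarrow> far i j \<Longrightarrow> e i * e j = e j * e i \<and> f i * f j = f j * f i"
  using rels unfolding Uq_rels_def by blast

lemma hom_mult: "calg_hom \<sigma> g \<Longrightarrow> g (x * y) = g x * g y" unfolding calg_hom_def by blast
lemma hom_add: "calg_hom \<sigma> g \<Longrightarrow> g (x + y) = g x + g y" unfolding calg_hom_def by blast
lemma hom_diff: "calg_hom \<sigma> g \<Longrightarrow> g (x - y) = g x - g y"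
  using hom_add[of g "x - y" y] by (simp add: eq_diff_eq)
lemma hom_minus: "calg_hom \<sigma> g \<Longrightarrow> g (- x) = - g x"
  using hom_diff[of g 0 x] hom_diff[of g 0 0] by simp
lemma hom_sig: "calg_hom \<sigma> g \<Longrightarrow> g (\<sigma> c) = \<sigma> c" unfolding calg_hom_def by blast
lemma hom_smult: "calg_hom \<sigma> g \<Longrightarrow> g (\<sigma> c * x) = \<sigma> c * g x"
  using hom_mult[of g "\<sigma> c" x] unfolding calg_hom_def by simp


definition sm :: "complex \<Rightarrow> 'a \<Rightarrow> 'a" where "sm c x = \<sigma> c * x"
lemma sm_left[simp]: "sm c x * y = sm c (x * y)" by (simp add: sm_def mult.assoc)
lemma sm_right[simp]: "x * sm c y = sm c (x * y)" by (simp add: sm_def scomm2)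
lemma sm_sm[simp]: "sm c (sm d x) = sm (c * d) x" by (simp add: sm_def sassoc)
lemma sm_add: "sm c (x + y) = sm c x + sm c y" by (simp add: sm_def algebra_simps)
lemma sm_diff: "sm c (x - y) = sm c x - sm c y" by (simp add: sm_def algebra_simps)
lemma sm_minus[simp]: "sm c (- x) = - sm c x" by (simp add: sm_def)
lemma sm_one[simp]: "sm 1 x = x" by (simp add: sm_def sone)
lemma sm_plus: "sm c x + sm d x = sm (c + d) x" by (simp add: sm_def sadd algebra_simps)
lemma sm_minus2: "sm c x - sm d x = sm (c - d) x" by (simp add: sm_def sdiff algebra_simps)
lemma sm_neg1: "sm (-1) x = - x" by (simp add: sm_def sminus sone)
lemma hom_sm: "calg_hom \<sigma> g \<Longrightarrow> g (sm c x) = sm c (g x)" by (simp add: sm_def hom_smult)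

lemma qq: "q - inverse q \<noteq> 0"
proof
  assume "q - inverse q = 0"
  then have "q * q = 1" using q0 by (simp add: field_simps)
  then have "(q - 1) * (q + 1) = 0" by (simp add: algebra_simps)
  then show False using q1 qm1 by (simp add: add_eq_0_iff2)
qed

lemma calc_e:
  assumes j: "1 \<le> j" "j + 2 \<le> n"
  shows "T j (T (j+1) (e j)) = e (j+1)"
proof -
  have J: "j \<in> {1..<n}" "j+1 \<in> {1..<n}" using j by auto
  define a where "a = e j"
  define b where "b = e (j+1)"
  define F where "F = f j"
  define K where "K = k j"
  define Ki where "Ki = kinv j"
  define c where "c = inverse (q - inverse q)"
  define X where "X = a * b - sm q (b * a)"
  define H where "H = sm c (K - Ki)"
  have adj1: "adj (j+1) j" "adj j (j+1)" by (auto simp: adj_def)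
  have Kia: "Ki * a = sm (inverse (q^2)) (a * Ki)"
    using ke(2)[OF J(1) J(1)] unfolding Ki_def a_def by (simp add: cartan_def power_int_minus sm_def)
  have Kib: "Ki * b = sm q (b * Ki)"
    using ke(2)[OF J(1) J(2)] unfolding Ki_def b_def by (simp add: cartan_def sm_def)
  have Kb: "K * b = sm (inverse q) (b * K)"
    using ke(1)[OF J(1) J(2)] unfolding K_def b_def by (simp add: cartan_def power_int_minus sm_def)
  have aF: "a * F = F * a + H" using ef[OF J(1) J(1)] unfolding a_def F_def H_def K_def Ki_def c_def sm_def
    by (simp add: algebra_simps)
  have bF: "b * F = F * b" using ef[OF J(2) J(1)] unfolding b_def F_def by simp
  have KKi: "K * Ki = 1" "Ki * K = 1" using kinv_k[OF J(1)] unfolding K_def Ki_def by auto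
  have q2: "inverse (q^2) * q = inverse q" "q * inverse (q^2) = inverse q" using q0 by (simp_all add: field_simps power2_eq_square)
  have q3: "q * inverse q = 1" "inverse q * q = 1" using q0 by simp_all
  have q4: "c * (inverse q - q) = -1"
    using qq unfolding c_def by (simp add: field_simps)
  have S1: "Ki * X = sm (inverse q) (X * Ki)"
  proof -
    have "Ki * (a * b) = sm (inverse q) (a * b * Ki)"
      by (simp add: mult.assoc[symmetric] Kia) (simp add: mult.assoc Kib q2)
    moreover have "Ki * (b * a) = sm (inverse q) (b * a * Ki)"
      by (simp add: mult.assoc[symmetric] Kib) (simp add: mult.assoc Kia q2)
    ultimately show ?thesis unfolding X_def by (simp add: algebra_simps sm_diff mult.commute)
  qed
  have S3: "X * F = F * X + (H * b - sm q (b * H))"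
  proof -
    have "a * b * F = (a * F) * b" by (simp add: mult.assoc bF)
    also have "\<dots> = F * a * b + H * b" by (simp add: aF algebra_simps)
    finally have 1: "a * b * F = F * a * b + H * b" .
    have "b * a * F = b * (a * F)" by (simp add: mult.assoc)
    also have "\<dots> = (b * F) * a + b * H" by (simp add: aF algebra_simps)
    also have "\<dots> = F * b * a + b * H" by (simp add: bF)
    finally have 2: "b * a * F = F * b * a + b * H" .
    show ?thesis using 1 2 unfolding X_def by (simp add: algebra_simps sm_diff sm_add)
  qed
  have S4: "H * b - sm q (b * H) = - (b * K)"
  proof -
    have "H * b - sm q (b * H) = sm c (sm (inverse q) (b * K) - sm q (b * Ki) - sm q (b * K) + sm q (b * Ki))"
      unfolding H_def by (simp add: algebra_simps sm_diff sm_add mult.assoc Kb Kib mult.commute)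
    also have "\<dots> = sm c (sm (inverse q - q) (b * K))"
      by (simp add: sm_minus2)
    also have "\<dots> = - (b * K)" by (simp add: q4 sm_neg1)
    finally show ?thesis .
  qed
  have "T j (T (j+1) (e j)) = T j (b * a - sm q (a * b))"
    using Tadj[OF J(2) J(1) adj1(1)] unfolding a_def b_def sm_def by simp
  also have "\<dots> = X * (- (F * Ki)) - sm q ((- (F * Ki)) * X)"
    using Tadj[OF J(1) J(2) adj1(2)] Tii[OF J(1)] Thom[OF J(1)]
    unfolding X_def a_def b_def F_def Ki_def by (simp add: hom_diff hom_mult hom_sm hom_sig sm_def)
  also have "\<dots> = (F * X - X * F) * Ki"
    by (simp add: algebra_simps mult.assoc S1 q3)
  also have "\<dots> = b * K * Ki"
  proof -
    have "F * X - X * F = b * K" using S3 S4 by simp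
    then show ?thesis by simp
  qed
  also have "\<dots> = b" by (simp add: mult.assoc KKi)
  finally show ?thesis unfolding b_def .
qed

lemma calc_f:
  assumes j: "1 \<le> j" "j + 2 \<le> n"
  shows "T j (T (j+1) (f j)) = f (j+1)"
proof -
  have J: "j \<in> {1..<n}" "j+1 \<in> {1..<n}" using j by auto
  define a where "a = f j"
  define b where "b = f (j+1)"
  define E where "E = e j"
  define K where "K = k j"
  define Ki where "Ki = kinv j"
  define c where "c = inverse (q - inverse q)"
  define X where "X = b * a - sm (inverse q) (a * b)"
  define H where "H = sm c (K - Ki)"
  have adj1: "adj (j+1) j" "adj j (j+1)" by (auto simp: adj_def)
  have Ka: "K * a = sm (inverse (q^2)) (a * K)"
    using kf(1)[OF J(1) J(1)] unfolding K_def a_def by (simp add: cartan_def power_int_minus sm_def)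
  have Kb: "K * b = sm q (b * K)"
    using kf(1)[OF J(1) J(2)] unfolding K_def b_def by (simp add: cartan_def sm_def)
  have Kib: "Ki * b = sm (inverse q) (b * Ki)"
    using kf(2)[OF J(1) J(2)] unfolding Ki_def b_def by (simp add: cartan_def power_int_minus sm_def)
  have Ea: "a * E = E * a - H" using ef[OF J(1) J(1)] unfolding a_def E_def H_def K_def Ki_def c_def sm_def
    by (simp add: algebra_simps)
  have bE: "b * E = E * b" using ef[OF J(1) J(2)] unfolding b_def E_def by simp
  have KKi: "K * Ki = 1" "Ki * K = 1" using kinv_k[OF J(1)] unfolding K_def Ki_def by auto
  have q2: "inverse (q^2) * q = inverse q" "q * inverse (q^2) = inverse q" using q0 by (simp_all add: field_simps power2_eq_square)
  have q3: "q * inverse q = 1" "inverse q * q = 1" using q0 by simp_all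
  have q4: "c * (1 - inverse q * inverse q) = inverse q"
    using qq q0 unfolding c_def by (simp add: field_simps)
  have S1: "X * K = sm q (K * X)"
  proof -
    have "K * (a * b) = sm (inverse q) (a * b * K)"
      by (simp add: mult.assoc[symmetric] Ka) (simp add: mult.assoc Kb q2)
    moreover have "K * (b * a) = sm (inverse q) (b * a * K)"
      by (simp add: mult.assoc[symmetric] Kb) (simp add: mult.assoc Ka q2)
    ultimately have "K * X = sm (inverse q) (X * K)" unfolding X_def by (simp add: algebra_simps sm_diff mult.commute)
    then show ?thesis by (simp add: q3)
  qed
  have S3: "X * E = E * X + (sm (inverse q) (H * b) - b * H)"
  proof -
    have "b * a * E = b * (a * E)" by (simp add: mult.assoc)
    also have "\<dots> = (b * E) * a - b * H" by (simp add: Ea algebra_simps)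
    also have "\<dots> = E * b * a - b * H" by (simp add: bE)
    finally have 1: "b * a * E = E * b * a - b * H" .
    have "a * b * E = (a * E) * b" by (simp add: mult.assoc bE)
    also have "\<dots> = E * a * b - H * b" by (simp add: Ea algebra_simps)
    finally have 2: "a * b * E = E * a * b - H * b" .
    have "X * E = b * a * E - sm (inverse q) (a * b * E)" unfolding X_def by (simp add: algebra_simps)
    also have "\<dots> = (E * b * a - b * H) - sm (inverse q) (E * a * b - H * b)" by (simp only: 1 2)
    also have "\<dots> = E * X + (sm (inverse q) (H * b) - b * H)" unfolding X_def by (simp add: algebra_simps sm_diff)
    finally show ?thesis .
  qed
  have S4: "sm (inverse q) (H * b) - b * H = sm (inverse q) (b * Ki)"
  proof -
    have "sm (inverse q) (H * b) - b * H = sm c (sm (inverse q * q) (b * K) - sm (inverse q * inverse q) (b * Ki) - b * K + b * Ki)"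
      unfolding H_def by (simp add: algebra_simps sm_diff sm_add mult.assoc Kb Kib mult.commute)
    also have "\<dots> = sm c (sm (1 - inverse q * inverse q) (b * Ki))"
      by (simp add: q3 sm_minus2[symmetric])
    also have "\<dots> = sm (inverse q) (b * Ki)" by (simp add: q4)
    finally show ?thesis .
  qed
  have "T j (T (j+1) (f j)) = T j (a * b - sm (inverse q) (b * a))"
    using Tadj[OF J(2) J(1) adj1(1)] unfolding a_def b_def sm_def by simp
  also have "\<dots> = (- (K * E)) * X - sm (inverse q) (X * (- (K * E)))"
    using Tadj[OF J(1) J(2) adj1(2)] Tii[OF J(1)] Thom[OF J(1)]
    unfolding X_def a_def b_def E_def K_def by (simp add: hom_diff hom_mult hom_sm hom_sig sm_def)
  also have "\<dots> = K * (X * E - E * X)"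
  proof -
    have "X * (K * E) = sm q (K * X * E)" by (simp add: mult.assoc[symmetric] S1)
    then show ?thesis by (simp add: algebra_simps q3)
  qed
  also have "\<dots> = sm (inverse q) (K * b * Ki)"
    using S3 S4 by (simp add: mult.assoc)
  also have "\<dots> = b" by (simp add: Kb q3 mult.assoc KKi)
  finally show ?thesis unfolding b_def .
qed

lemma hom_id: "calg_hom \<sigma> id" unfolding calg_hom_def by simp
lemma hom_comp: "calg_hom \<sigma> g \<Longrightarrow> calg_hom \<sigma> h \<Longrightarrow> calg_hom \<sigma> (g \<circ> h)"
  unfolding calg_hom_def by simp

lemma foldr_comp: "foldr (\<circ>) fs g = foldr (\<circ>) fs id \<circ> g"
  by (induction fs) auto
lemma hom_id': "calg_hom \<sigma> (\<lambda>x. x)" unfolding calg_hom_def by simp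

lemma Tchain_0: "Tchain T 0 = id" unfolding Tchain_def by simp
lemma Tchain_Suc: "Tchain T (Suc m) = Tchain T m \<circ> T (Suc m)"
  unfolding Tchain_def by (simp add: foldr_append foldr_comp[of _ "T m \<circ> T (Suc m)"] foldr_comp[of _ "T m"] o_assoc)

lemma Tchain_hom: "m < n \<Longrightarrow> calg_hom \<sigma> (Tchain T m)"
proof (induction m)
  case 0 then show ?case by (simp add: Tchain_0 hom_id hom_id')
next
  case (Suc m)
  have 1: "calg_hom \<sigma> (Tchain T m)" using Suc by simp
  have 2: "calg_hom \<sigma> (T (Suc m))" using Suc.prems by (intro Thom) auto
  show ?case unfolding Tchain_Suc by (rule hom_comp[OF 1 2])
qed

lemma Tchain_fix: "1 \<le> l \<Longrightarrow> l < n \<Longrightarrow> m + 1 < l \<Longrightarrow> Tchain T m (e l) = e l \<and> Tchain T m (f l) = f l"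
proof (induction m)
  case 0 then show ?case by (simp add: Tchain_0)
next
  case (Suc m)
  have "T (Suc m) (e l) = e l \<and> T (Suc m) (f l) = f l"
    using Tfar[of "Suc m" l] Suc.prems by (simp add: far_def)
  then show ?case using Suc by (simp add: Tchain_Suc)
qed

lemma Tchain_shift: "1 \<le> l \<Longrightarrow> l + 1 \<le> m \<Longrightarrow> m < n \<Longrightarrow> Tchain T m (e l) = e (l+1) \<and> Tchain T m (f l) = f (l+1)"
proof (induction m)
  case 0 then show ?case by simp
next
  case (Suc m)
  show ?case
  proof (cases "Suc m = l + 1")
    case True
    then obtain p where p: "l = Suc p" "m = Suc p" using Suc.prems by (cases l) auto
    have "Tchain T (Suc m) (e l) = Tchain T p (T (Suc p) (T (Suc (Suc p)) (e (Suc p))))"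
      using p by (simp add: Tchain_Suc)
    also have "\<dots> = Tchain T p (e (Suc (Suc p)))" using calc_e[of "Suc p"] Suc.prems p by simp
    also have "\<dots> = e (l + 1)" using Tchain_fix[of "Suc (Suc p)" p] Suc.prems p by simp
    finally have 1: "Tchain T (Suc m) (e l) = e (l + 1)" .
    have "Tchain T (Suc m) (f l) = Tchain T p (T (Suc p) (T (Suc (Suc p)) (f (Suc p))))"
      using p by (simp add: Tchain_Suc)
    also have "\<dots> = Tchain T p (f (Suc (Suc p)))" using calc_f[of "Suc p"] Suc.prems p by simp
    also have "\<dots> = f (l + 1)" using Tchain_fix[of "Suc (Suc p)" p] Suc.prems p by simp
    finally show ?thesis using 1 by simp
  next
    case False
    have "T (Suc m) (e l) = e l \<and> T (Suc m) (f l) = f l"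
      using Tfar[of "Suc m" l] Suc.prems False by (simp add: far_def)
    then show ?thesis using Suc False by (simp add: Tchain_Suc)
  qed
qed

definition P :: "nat \<Rightarrow> 'a \<Rightarrow> 'a" where
  "P i = foldr (\<circ>) (map (\<lambda>l. Tchain T (n - l)) [1..<i]) id"

lemma P_1: "P 1 = id" unfolding P_def by simp
lemma P_Suc0[simp]: "P (Suc 0) = id" unfolding P_def by simp
lemma P_Suc: "1 \<le> i \<Longrightarrow> P (Suc i) = P i \<circ> Tchain T (n - i)"
  unfolding P_def by (simp add: foldr_append foldr_comp[of _ "Tchain T (n - i)"])

lemma Tchain_hom': "1 \<le> l \<Longrightarrow> calg_hom \<sigma> (Tchain T (n - l))"
  by (cases "n = 0") (auto simp: Tchain_0 hom_id hom_id' intro: Tchain_hom)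

lemma P_hom: "calg_hom \<sigma> (P i)"
proof (induction i)
  case 0 then show ?case by (simp add: P_def hom_id hom_id')
next
  case (Suc i)
  show ?case
  proof (cases "i = 0")
    case True then show ?thesis by (simp add: P_1 hom_id hom_id')
  next
    case False
    have 2: "calg_hom \<sigma> (Tchain T (n - i))" using False by (intro Tchain_hom') auto
    have 3: "P (Suc i) = P i \<circ> Tchain T (n - i)" using False by (intro P_Suc) auto
    show ?thesis unfolding 3 by (rule hom_comp[OF Suc 2])
  qed
qed

lemma P_shift: "1 \<le> i \<Longrightarrow> 1 \<le> l \<Longrightarrow> l + i \<le> n \<Longrightarrow> P i (e l) = e (l + i - 1) \<and> P i (f l) = f (l + i - 1)"
proof (induction i arbitrary: l rule: nat_induct_at_least)
  case base then show ?case by (simp add: P_1)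
next
  case (Suc i)
  have "Tchain T (n - i) (e l) = e (l+1) \<and> Tchain T (n - i) (f l) = f (l+1)"
    using Tchain_shift[of l "n - i"] Suc by auto
  then show ?case using Suc.IH[of "l+1"] Suc by (simp add: P_Suc)
qed

abbreviation EE where "EE a b \<equiv> Eij n T e f a b"

lemma EE_up: "a < b \<Longrightarrow> EE a b = P a (Tchain T (b - a - 1) (e (b - a)))"
  unfolding Eij_def Tw_def P_def by simp
lemma EE_down: "b < a \<Longrightarrow> EE a b = P b (Tchain T (a - b - 1) (f (a - b)))"
  unfolding Eij_def Tw_def P_def by simp

lemma E_diag: "1 \<le> i \<Longrightarrow> i < n \<Longrightarrow> EE i (i+1) = e i \<and> EE (i+1) i = f i"
  using P_shift[of i 1] by (simp add: EE_up EE_down Tchain_0)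

lemma E_rec_up:
  assumes "1 \<le> i" "i + 1 < j" "j \<le> n"
  shows "EE i j = EE i (j-1) * e (j-1) - sm q (e (j-1) * EE i (j-1))"
proof -
  define p where "p = j - i - 2"
  have p: "j - i = Suc (Suc p)" using assms unfolding p_def by arith
  have jj: "j - 1 = Suc (p + i)" "Suc (Suc (p + i)) \<le> n" using p assms by arith+
  have adj1: "adj (Suc p) (Suc (Suc p))" by (simp add: adj_def)
  have h: "calg_hom \<sigma> (Tchain T p)" using Tchain_hom[of p] p assms by simp
  have "Tchain T (j - i - 1) (e (j - i)) = Tchain T p (T (Suc p) (e (Suc (Suc p))))"
    using p by (simp add: Tchain_Suc)
  also have "\<dots> = Tchain T p (e (Suc p) * e (Suc (Suc p)) - sm q (e (Suc (Suc p)) * e (Suc p)))"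
    using Tadj[OF _ _ adj1] p assms by (simp add: sm_def)
  also have "\<dots> = Tchain T p (e (Suc p)) * e (Suc (Suc p)) - sm q (e (Suc (Suc p)) * Tchain T p (e (Suc p)))"
    using h Tchain_fix[of "Suc (Suc p)" p] p assms by (simp add: hom_diff hom_mult hom_sm)
  finally have 1: "Tchain T (j - i - 1) (e (j - i)) = \<dots>" .
  have 2: "P i (e (Suc (Suc p))) = e (j - 1)" using P_shift[of i "Suc (Suc p)"] jj assms by simp
  have pp: "j - Suc (Suc i) = p" "j - Suc i = Suc p" using p by arith+
  have 3: "EE i (j - 1) = P i (Tchain T p (e (Suc p)))" using EE_up[of i "j-1"] pp assms
    by simp
  show ?thesis using assms 1 2 3 P_hom[of i] by (simp add: EE_up hom_diff hom_mult hom_sm)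
qed

lemma E_rec_down:
  assumes "1 \<le> j" "j + 1 < i" "i \<le> n"
  shows "EE i j = f (i-1) * EE (i-1) j - sm (inverse q) (EE (i-1) j * f (i-1))"
proof -
  define p where "p = i - j - 2"
  have p: "i - j = Suc (Suc p)" using assms unfolding p_def by arith
  have jj: "i - 1 = Suc (p + j)" "Suc (Suc (p + j)) \<le> n" using p assms by arith+
  have adj1: "adj (Suc p) (Suc (Suc p))" by (simp add: adj_def)
  have h: "calg_hom \<sigma> (Tchain T p)" using Tchain_hom[of p] p assms by simp
  have "Tchain T (i - j - 1) (f (i - j)) = Tchain T p (T (Suc p) (f (Suc (Suc p))))"
    using p by (simp add: Tchain_Suc)
  also have "\<dots> = Tchain T p (f (Suc (Suc p)) * f (Suc p) - sm (inverse q) (f (Suc p) * f (Suc (Suc p))))"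
    using Tadj[OF _ _ adj1] p assms by (simp add: sm_def)
  also have "\<dots> = f (Suc (Suc p)) * Tchain T p (f (Suc p)) - sm (inverse q) (Tchain T p (f (Suc p)) * f (Suc (Suc p)))"
    using h Tchain_fix[of "Suc (Suc p)" p] p assms by (simp add: hom_diff hom_mult hom_sm)
  finally have 1: "Tchain T (i - j - 1) (f (i - j)) = \<dots>" .
  have 2: "P j (f (Suc (Suc p))) = f (i - 1)" using P_shift[of j "Suc (Suc p)"] jj assms by simp
  have pp: "i - Suc (Suc j) = p" "i - Suc j = Suc p" using p by arith+
  have 3: "EE (i - 1) j = P j (Tchain T p (f (Suc p)))" using EE_down[of j "i-1"] pp assms
    by simp
  show ?thesis using assms 1 2 3 P_hom[of j] by (simp add: EE_down hom_diff hom_mult hom_sm)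
qed

lemma comm_br:
  assumes "x * c = c * x" "y * c = c * y"
  shows "(x * y - sm s (y * x)) * c = c * (x * y - sm s (y * x))"
proof -
  have 1: "x * y * c = c * (x * y)" by (metis assms mult.assoc)
  have 2: "y * x * c = c * (y * x)" by (metis assms mult.assoc)
  show ?thesis by (simp add: algebra_simps sm_diff) (metis 1 2 mult.assoc)
qed

lemma id_up:
  assumes "A * c = c * A"
  shows "(A * B - sm s (B * A)) * c - sm s (c * (A * B - sm s (B * A))) =
         A * (B * c - sm s (c * B)) - sm s ((B * c - sm s (c * B)) * A)"
proof -
  have 1: "B * (A * c) = B * (c * A)" using assms by simp
  have 2: "c * (A * B) = A * (c * B)" using assms by (metis mult.assoc)
  show ?thesis by (simp add: algebra_simps sm_diff 1 2)
qed

lemma id_down: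
  assumes "x * B = B * x"
  shows "x * (A * B - sm s (B * A)) - sm s ((A * B - sm s (B * A)) * x) =
         (x * A - sm s (A * x)) * B - sm s (B * (x * A - sm s (A * x)))"
proof -
  have 1: "x * (B * A) = B * (x * A)" using assms by (metis mult.assoc)
  have 2: "A * (B * x) = A * (x * B)" using assms by simp
  show ?thesis by (simp add: algebra_simps sm_diff 1 2)
qed

lemma E_comm_up: "1 \<le> i \<Longrightarrow> l < n \<Longrightarrow> i < m \<Longrightarrow> m < l \<Longrightarrow> EE i m * e l = e l * EE i m"
proof (induction m)
  case 0 then show ?case by simp
next
  case (Suc m)
  show ?case
  proof (cases "m = i")
    case True
    then show ?thesis using E_diag[of i] efar[of i l] Suc.prems by (simp add: far_def)
  next
    case False
    have r: "EE i (Suc m) = EE i m * e m - sm q (e m * EE i m)"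
      using E_rec_up[of i "Suc m"] Suc.prems False by simp
    have c1: "EE i m * e l = e l * EE i m" using Suc False by simp
    have c2: "e m * e l = e l * e m" using efar[of m l] Suc.prems False by (simp add: far_def)
    show ?thesis unfolding r by (rule comm_br[OF c1 c2])
  qed
qed

lemma E_comm_down: "1 \<le> j \<Longrightarrow> l < n \<Longrightarrow> j < m \<Longrightarrow> m < l \<Longrightarrow> EE m j * f l = f l * EE m j"
proof (induction m)
  case 0 then show ?case by simp
next
  case (Suc m)
  show ?case
  proof (cases "m = j")
    case True
    then show ?thesis using E_diag[of j] efar[of j l] Suc.prems by (simp add: far_def)
  next
    case False
    have r: "EE (Suc m) j = f m * EE m j - sm (inverse q) (EE m j * f m)"
      using E_rec_down[of j "Suc m"] Suc.prems False by simp
    have c1: "EE m j * f l = f l * EE m j" using Suc False by simp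
    have c2: "f m * f l = f l * f m" using efar[of m l] Suc.prems False by (simp add: far_def)
    show ?thesis unfolding r by (rule comm_br[OF c2 c1])
  qed
qed

lemma main_up: "1 \<le> i \<Longrightarrow> i < m \<Longrightarrow> m < j \<Longrightarrow> j \<le> n \<Longrightarrow>
   EE i j = EE i m * EE m j - sm q (EE m j * EE i m)"
proof (induction j)
  case 0 then show ?case by simp
next
  case (Suc j)
  show ?case
  proof (cases "j = m")
    case True
    then show ?thesis using E_rec_up[of i "Suc m"] E_diag[of m] Suc.prems by simp
  next
    case False
    have r1: "EE i (Suc j) = EE i j * e j - sm q (e j * EE i j)"
      using E_rec_up[of i "Suc j"] Suc.prems by simp
    have r2: "EE m (Suc j) = EE m j * e j - sm q (e j * EE m j)"
      using E_rec_up[of m "Suc j"] Suc.prems False by simp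
    have ih: "EE i j = EE i m * EE m j - sm q (EE m j * EE i m)" using Suc False by simp
    have c: "EE i m * e j = e j * EE i m" using E_comm_up[of i j m] Suc.prems False by simp
    show ?thesis unfolding r1 r2 ih by (rule id_up[OF c])
  qed
qed

lemma main_down: "1 \<le> j \<Longrightarrow> j < m \<Longrightarrow> m < i \<Longrightarrow> i \<le> n \<Longrightarrow>
   EE i j = EE i m * EE m j - sm (inverse q) (EE m j * EE i m)"
proof (induction i)
  case 0 then show ?case by simp
next
  case (Suc i)
  show ?case
  proof (cases "i = m")
    case True
    then show ?thesis using E_rec_down[of j "Suc m"] E_diag[of m] Suc.prems by simp
  next
    case False
    have r1: "EE (Suc i) j = f i * EE i j - sm (inverse q) (EE i j * f i)"
      using E_rec_down[of j "Suc i"] Suc.prems by simp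
    have r2: "EE (Suc i) m = f i * EE i m - sm (inverse q) (EE i m * f i)"
      using E_rec_down[of m "Suc i"] Suc.prems False by simp
    have ih: "EE i j = EE i m * EE m j - sm (inverse q) (EE m j * EE i m)" using Suc False by simp
    have c: "f i * EE m j = EE m j * f i" using E_comm_down[of j i m] Suc.prems False by simp
    show ?thesis unfolding r1 r2 ih by (rule id_down[OF c])
  qed
qed

end

theorem proposition3p1:
  fixes n :: nat and q :: complex and \<sigma> :: "complex \<Rightarrow> 'a::ring_1"
    and e f k kinv :: "nat \<Rightarrow> 'a" and T :: "nat \<Rightarrow> 'a \<Rightarrow> 'a"
  assumes "q \<noteq> 0" and "q \<noteq> 1" and "q \<noteq> -1"
    and "calg \<sigma>"
    and "Uq_rels n q \<sigma> e f k kinv"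
    and "lusztig_T n q \<sigma> e f k kinv T"
  shows "(\<forall>i\<in>{1..<n}. Eij n T e f i (i + 1) = e i \<and> Eij n T e f (i + 1) i = f i)
    \<and> (\<forall>i k' j. 1 \<le> i \<and> i < k' \<and> k' < j \<and> j \<le> n \<longrightarrow>
         Eij n T e f i j = Eij n T e f i k' * Eij n T e f k' j - \<sigma> q * (Eij n T e f k' j * Eij n T e f i k'))
    \<and> (\<forall>i k' j. n \<ge> i \<and> i > k' \<and> k' > j \<and> j \<ge> 1 \<longrightarrow>
         Eij n T e f i j = Eij n T e f i k' * Eij n T e f k' j - \<sigma> (inverse q) * (Eij n T e f k' j * Eij n T e f i k'))"
proof -
  interpret U: uq n q \<sigma> e f k kinv T using assms by (unfold_locales) auto
  show ?thesis
    using U.E_diag U.main_up U.main_down unfolding U.sm_def by auto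
qed

end
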